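(* Let $A\subset(0,1)^n$ be an open subanalytic cell which is prepared with center $0$, and let $J=\{i\in\{1,\dots,n\}: x_i \text{ is asymptotically undetermined on } A\}$. Then for any nonzero $\gamma\in\mathbb{Q}^n$ with support in $J$, the image of the function $A\to\mathbb{R}$, $x\mapsto x^\gamma=\prod_i x_i^{\gamma_i}$, is not contained in any compact subset of $(0,+\infty)$.
   Context: "Subanalytic" means globally subanalytic (definable in the real field expanded by all restricted analytic functions). A function on a set is analytic if it extends analytically to an open neighbourhood; an analytic unit is an analytic function of constant nonzero sign. Subanalytic terms: finite compositions of restricted analytic functions, $+$, $\times$ and the functions $t\mapsto t^r$ ($t\ge0$), $0$ ($t<0$), $r\in\mathbb{Q}$. A subanalytic cell $A\subset\mathbb{R}^n$ is a set such that for every $i$, $\Pi_i(A)$ is a subanalytic cylinder over $\Pi_{i-1}(A)$ in the variable $x_i$, i.e. $\Pi_{i-1}(A)$ is defined quantifier-freely by subanalytic terms, $=,<$, and $\Pi_i(A)$ is the graph $x_i=a(x_{<i})$, or $x_i>a$, or $x_i<a$, or $a<x_i<b$ over $\Pi_{i-1}(A)$ with $a<b$ analytic subanalytic terms (for $i=1$: a point or an open interval). The cell is open if no $\Pi_i(A)$ is a graph. For an open cell $A\subset(0,1)^n$ the zero tuple is a center, with coordinates $x$ themselves. Write, for $i=1,\dots,n$, $\Pi_i(A)=\{x_{\le i}: x_{<i}\in\Pi_{i-1}(A),\ a_i(x_{<i})<x_i<b_i(x_{<i})\}$. A strong subanalytic unit on such an open cell $A'\subset(0,1)^k$ with center $0$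 is $U\circ\varphi$ with $\varphi(x)=(x^{\beta_1},\dots,x^{\beta_N})$ bounded on $A'$, $\beta_j\in\mathbb{Q}^k$, and $U$ an analytic unit on the closure of the image of $\varphi$. $x_i$ is asymptotically determined on $A$ if there is $C>0$ with $b_i<Ca_i$ on $\Pi_{i-1}(A)$, asymptotically undetermined otherwise. $\gamma\in\mathbb{Q}^n$ has support in $J$ if $\gamma_i=0$ for $i\notin J$. Preparedness (for open cells $A'\subset(0,1)^k$ with center $0$), defined by induction on $k$ for $J'$ a subset of the asymptotically undetermined indices: for $k=0$ everything is $\emptyset$-prepared; for $k\ge1$, $A'$ is $J'$-prepared if the family $\{a_k,b_k,b_k-a_k\}$ is $(J'\cap\{1,\dots,k-1\})$-prepared on $\Pi_{k-1}(A')$ with center $0$ and $0$ lies in the closure of the image of $a_k$; a finite family $\mathcal{F}$ of subanalytic functions on $A'$ is $J'$-prepared on $A'$ if $A'$ is $J'$-prepared and each $g\in\mathcal{F}$ is either $0$ on $A'$ or equals $x^\alpha u(x)$ with $u$ a strong subanalytic unit with center $0$ and $\alpha$ with support in $J'$. "Prepared" means $J'$-prepared with $J'$ the set of all asymptotically undetermined indices. *)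

theory Defs
  imports "HOL-Analysis.Analysis"
begin

text \<open>Points of R^k are real lists of length k; coordinate i (0-based) is x!i,
  corresponding to the paper's x_(i+1).\<close>

definition vecs :: "nat \<Rightarrow> real list set" where
  "vecs k = {x. length x = k}"

definition proj :: "nat \<Rightarrow> real list set \<Rightarrow> real list set" where
  "proj i A = (\<lambda>x. take i x) ` A"

text \<open>Openness / closure / boundedness in R^k (sup-norm topology = Euclidean topology).\<close>
definition lopen :: "nat \<Rightarrow> real list set \<Rightarrow> bool" where
  "lopen k U \<longleftrightarrow> U \<subseteq> vecs k \<and>
     (\<forall>p\<in>U. \<exists>r>0. \<forall>y\<in>vecs k. (\<forall>i<k. \<bar>y!i - p!i\<bar> < r) \<longrightarrow> y \<in> U)"

definition lclosure :: "nat \<Rightarrow> real list set \<Rightarrow> real list set" where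
  "lclosure k S = {y\<in>vecs k. \<forall>e>0. \<exists>z\<in>S. \<forall>i<k. \<bar>z!i - y!i\<bar> < e}"

definition lbounded :: "real list set \<Rightarrow> bool" where
  "lbounded S \<longleftrightarrow> (\<exists>M. \<forall>y\<in>S. \<forall>i<length y. \<bar>y!i\<bar> \<le> M)"

text \<open>Real analyticity at a point: locally the sum of an (absolutely) convergent
  multivariate power series; multi-indices are nat lists of length k.\<close>
definition real_analytic_at :: "nat \<Rightarrow> (real list \<Rightarrow> real) \<Rightarrow> real list \<Rightarrow> bool" where
  "real_analytic_at k g p \<longleftrightarrow> (\<exists>r>0. \<exists>c :: nat list \<Rightarrow> real.
     \<forall>y\<in>vecs k. (\<forall>i<k. \<bar>y!i - p!i\<bar> < r) \<longrightarrow>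
       ((\<lambda>\<alpha>. c \<alpha> * (\<Prod>i<k. (y!i - p!i) ^ (\<alpha>!i))) has_sum g y) {\<alpha>. length \<alpha> = k})"

definition analytic_on_set :: "nat \<Rightarrow> (real list \<Rightarrow> real) \<Rightarrow> real list set \<Rightarrow> bool" where
  "analytic_on_set k f S \<longleftrightarrow> (\<exists>U g. lopen k U \<and> S \<subseteq> U \<and>
     (\<forall>p\<in>U. real_analytic_at k g p) \<and> (\<forall>y\<in>S. g y = f y))"

definition analytic_unit_on :: "nat \<Rightarrow> (real list \<Rightarrow> real) \<Rightarrow> real list set \<Rightarrow> bool" where
  "analytic_unit_on k f S \<longleftrightarrow> analytic_on_set k f S \<and>
     ((\<forall>y\<in>S. f y > 0) \<or> (\<forall>y\<in>S. f y < 0))"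

definition cube :: "nat \<Rightarrow> real list set" where
  "cube m = {x\<in>vecs m. \<forall>i<m. \<bar>x!i\<bar> \<le> 1}"

definition restricted_analytic :: "nat \<Rightarrow> (real list \<Rightarrow> real) \<Rightarrow> bool" where
  "restricted_analytic m F \<longleftrightarrow> analytic_on_set m F (cube m) \<and>
     (\<forall>x\<in>vecs m. x \<notin> cube m \<longrightarrow> F x = 0)"

definition rpow :: "rat \<Rightarrow> real \<Rightarrow> real" where
  "rpow r t = (if t > 0 then t powr (real_of_rat r)
               else if t = 0 then (if r = 0 then 1 else 0) else 0)"

inductive sa_term :: "nat \<Rightarrow> (real list \<Rightarrow> real) \<Rightarrow> bool" where
  var: "j < m \<Longrightarrow> sa_term m (\<lambda>x. x!j)"
| add: "sa_term m f \<Longrightarrow> sa_term m g \<Longrightarrow> sa_term m (\<lambda>x. f x + g x)"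
| mult: "sa_term m f \<Longrightarrow> sa_term m g \<Longrightarrow> sa_term m (\<lambda>x. f x * g x)"
| pow: "sa_term m f \<Longrightarrow> sa_term m (\<lambda>x. rpow r (f x))"
| ran: "restricted_analytic k F \<Longrightarrow> length fs = k \<Longrightarrow> (\<forall>f\<in>set fs. sa_term m f) \<Longrightarrow>
          sa_term m (\<lambda>x. F (map (\<lambda>f. f x) fs))"

text \<open>Open subanalytic cell in R^n (every Pi_(i+1)(A) is a band a < x_i < b over Pi_i(A),
  with a < b analytic subanalytic terms; for i = 0 an open interval with constant ends).\<close>
definition open_cell :: "nat \<Rightarrow> real list set \<Rightarrow> bool" where
  "open_cell n A \<longleftrightarrow> A \<noteq> {} \<and> A \<subseteq> vecs n \<and>
    (\<forall>i<n. \<exists>a b. sa_term i a \<and> sa_term i b \<and>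
        analytic_on_set i a (proj i A) \<and> analytic_on_set i b (proj i A) \<and>
        (\<forall>x\<in>proj i A. a x < b x) \<and>
        proj (Suc i) A = {x @ [t] | x t. x \<in> proj i A \<and> a x < t \<and> t < b x})"

definition unit_box :: "nat \<Rightarrow> real list set" where
  "unit_box n = {x\<in>vecs n. \<forall>i<n. 0 < x!i \<and> x!i < 1}"

text \<open>The boundary functions a_i, b_i of the cell (canonically: inf/sup of the fibres).\<close>
definition lowb :: "real list set \<Rightarrow> nat \<Rightarrow> real list \<Rightarrow> real" where
  "lowb A i x = Inf {t. x @ [t] \<in> proj (Suc i) A}"

definition uppb :: "real list set \<Rightarrow> nat \<Rightarrow> real list \<Rightarrow> real" where
  "uppb A i x = Sup {t. x @ [t] \<in> proj (Suc i) A}"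

definition asymp_determined :: "real list set \<Rightarrow> nat \<Rightarrow> bool" where
  "asymp_determined A i \<longleftrightarrow> (\<exists>C>0. \<forall>x\<in>proj i A. uppb A i x < C * lowb A i x)"

definition undet :: "nat \<Rightarrow> real list set \<Rightarrow> nat set" where
  "undet n A = {i. i < n \<and> \<not> asymp_determined A i}"

definition monom :: "real list \<Rightarrow> rat list \<Rightarrow> real" where
  "monom x \<gamma> = (\<Prod>i<length x. (x!i) powr (real_of_rat (\<gamma>!i)))"

definition support_in :: "rat list \<Rightarrow> nat set \<Rightarrow> bool" where
  "support_in \<gamma> J \<longleftrightarrow> (\<forall>i<length \<gamma>. i \<notin> J \<longrightarrow> \<gamma>!i = 0)"

definition strong_unit :: "nat \<Rightarrow> real list set \<Rightarrow> (real list \<Rightarrow> real) \<Rightarrow> bool" where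
  "strong_unit k B u \<longleftrightarrow> (\<exists>(\<beta>s :: rat list list) U.
     (\<forall>\<beta>\<in>set \<beta>s. length \<beta> = k) \<and>
     lbounded ((\<lambda>x. map (monom x) \<beta>s) ` B) \<and>
     analytic_unit_on (length \<beta>s) U (lclosure (length \<beta>s) ((\<lambda>x. map (monom x) \<beta>s) ` B)) \<and>
     (\<forall>x\<in>B. u x = U (map (monom x) \<beta>s)))"

text \<open>J-preparedness of an open cell A \<subseteq> (0,1)^k (recursion on k), with the
  family condition for {a_k, b_k, b_k - a_k} on Pi_(k-1)(A) inlined.\<close>
fun prepared :: "nat \<Rightarrow> nat set \<Rightarrow> real list set \<Rightarrow> bool" where
  "prepared 0 J A = True"
| "prepared (Suc k) J A =
     (prepared k (J \<inter> {..<k}) (proj k A) \<and>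
      (\<forall>g\<in>{lowb A k, uppb A k, (\<lambda>x. uppb A k x - lowb A k x)}.
         (\<forall>x\<in>proj k A. g x = 0) \<or>
         (\<exists>\<alpha> u. length \<alpha> = k \<and> support_in \<alpha> (J \<inter> {..<k}) \<and> strong_unit k (proj k A) u \<and>
              (\<forall>x\<in>proj k A. g x = monom x \<alpha> * u x))) \<and>
      (0::real) \<in> closure (lowb A k ` proj k A))"

end

theory Submission
  imports Defs
begin

lemma monom_split:
  fixes y :: "real list" and \<gamma> :: "rat list"
  assumes len: "length y = n" and mn: "m < n"
    and z: "\<And>i. m < i \<Longrightarrow> i < n \<Longrightarrow> \<gamma>!i = 0"
    and pos: "\<And>i. i < n \<Longrightarrow> y!i > 0"
  shows "monom y \<gamma> = (\<Prod>i<m. (take m y ! i) powr real_of_rat (\<gamma>!i)) * (y!m) powr real_of_rat (\<gamma>!m)"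
proof -
  have "monom y \<gamma> = (\<Prod>i<n. (y!i) powr real_of_rat (\<gamma>!i))" by (simp add: monom_def len)
  also have "\<dots> = (\<Prod>i<Suc m. (y!i) powr real_of_rat (\<gamma>!i))"
  proof (rule prod.mono_neutral_right)
    show "finite {..<n}" by simp
    show "{..<Suc m} \<subseteq> {..<n}" using mn by auto
    show "\<forall>i\<in>{..<n} - {..<Suc m}. (y!i) powr real_of_rat (\<gamma>!i) = 1"
      using z pos by (metis DiffE lessThan_iff not_less_eq order_less_irrefl powr_zero_eq_one of_rat_0 less_Suc_eq_le le_neq_implies_less)
  qed
  also have "\<dots> = (\<Prod>i<m. (take m y ! i) powr real_of_rat (\<gamma>!i)) * (y!m) powr real_of_rat (\<gamma>!m)"
    by (simp add: prod.lessThan_Suc)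
  finally show ?thesis .
qed

theorem lemma3p5:
  fixes n :: nat and A :: "real list set" and \<gamma> :: "rat list"
  assumes "open_cell n A"
    and "A \<subseteq> unit_box n"
    and "prepared n (undet n A) A"
    and "length \<gamma> = n"
    and "\<gamma> \<noteq> replicate n 0"
    and "support_in \<gamma> (undet n A)"
  shows "\<not> (\<exists>K. compact K \<and> K \<subseteq> {0<..} \<and> (\<lambda>x. monom x \<gamma>) ` A \<subseteq> K)"
proof
  assume "\<exists>K. compact K \<and> K \<subseteq> {0<..} \<and> (\<lambda>x. monom x \<gamma>) ` A \<subseteq> K"
  then obtain K where K: "compact K" "K \<subseteq> {0<..}" "(\<lambda>x. monom x \<gamma>) ` A \<subseteq> K" by blast
  have Ane: "A \<noteq> {}" using assms(1) by (simp add: open_cell_def)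
  then have Kne: "K \<noteq> {}" using K(3) by auto
  define c where "c = Inf K"
  define C where "C = Sup K"
  have bdd: "bdd_below K" "bdd_above K" using compact_imp_bounded[OF K(1)] by (auto simp: bounded_imp_bdd_below bounded_imp_bdd_above)
  have cK: "c \<in> K" unfolding c_def using K(1) Kne bdd by (simp add: closed_contains_Inf compact_imp_closed)
  have cpos: "c > 0" using cK K(2) by auto
  have bnd: "c \<le> monom y \<gamma> \<and> monom y \<gamma> \<le> C" if "y \<in> A" for y
  proof -
    have "monom y \<gamma> \<in> K" using K(3) that by auto
    then show ?thesis unfolding c_def C_def using bdd by (simp add: cInf_lower cSup_upper)
  qed
  have Cc: "c \<le> C" using bnd Ane by (meson order.trans ex_in_conv)
  define S where "S = {i. i < n \<and> \<gamma>!i \<noteq> 0}"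
  have Sne: "S \<noteq> {}"
  proof
    assume "S = {}"
    then have "\<gamma> = replicate n 0" using assms(4) by (auto simp: S_def list_eq_iff_nth_eq)
    then show False using assms(5) by simp
  qed
  define m where "m = Max S"
  have finS: "finite S" by (simp add: S_def)
  have mS: "m \<in> S" unfolding m_def using Max_in[OF finS Sne] by simp
  then have mn: "m < n" and gm: "\<gamma>!m \<noteq> 0" by (auto simp: S_def)
  have zero: "\<gamma>!i = 0" if "m < i" "i < n" for i
  proof (rule ccontr)
    assume "\<gamma>!i \<noteq> 0"
    then have "i \<in> S" using that by (simp add: S_def)
    then have "i \<le> m" unfolding m_def using finS by simp
    then show False using that by simp
  qed
  have mJ: "m \<in> undet n A" using assms(6) assms(4) mn gm by (auto simp: support_in_def)
  define g where "g = real_of_rat (\<gamma>!m)"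
  have gnz: "g \<noteq> 0" using gm by (simp add: g_def)
  define P where "P = (\<lambda>x::real list. \<Prod>i<m. (x ! i) powr real_of_rat (\<gamma>!i))"
  define L where "L = ln C - ln c"
  define D where "D = exp (L / \<bar>g\<bar>)"
  have Dpos: "D > 0" by (simp add: D_def)
  have Lnn: "L \<ge> 0" using Cc cpos by (simp add: L_def)
  have D1: "D \<ge> 1" using Lnn by (simp add: D_def)
  have Ay: "length y = n \<and> (\<forall>i<n. 0 < y!i \<and> y!i < 1)" if "y \<in> A" for y
    using assms(2) that by (auto simp: unit_box_def vecs_def)
  have split: "monom y \<gamma> = P (take m y) * (y!m) powr g" if "y \<in> A" for y
    unfolding P_def g_def using monom_split[of y n m \<gamma>] Ay[OF that] mn zero by auto
  have key: "t \<le> D * s" if y: "y \<in> A" and z: "z \<in> A" and tk: "take m y = take m z"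
    and s: "s = y!m" and t: "t = z!m" for y z s t
  proof -
    have sp: "s > 0" "t > 0" using Ay[OF y] Ay[OF z] mn s t by auto
    have Pp: "P (take m y) > 0" unfolding P_def using Ay[OF y] mn
      by (intro prod_pos) (metis (no_types, lifting) lessThan_iff less_trans nth_take powr_gt_zero order_less_irrefl)
    have e1: "ln (monom y \<gamma>) = ln (P (take m y)) + g * ln s"
      using split[OF y] Pp sp s by (simp add: ln_mult ln_powr)
    have e2: "ln (monom z \<gamma>) = ln (P (take m y)) + g * ln t"
      using split[OF z] Pp sp t tk by (simp add: ln_mult ln_powr)
    have b1: "ln c \<le> ln (monom y \<gamma>)" "ln (monom y \<gamma>) \<le> ln C"
      using bnd[OF y] cpos by auto
    have b2: "ln c \<le> ln (monom z \<gamma>)" "ln (monom z \<gamma>) \<le> ln C"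
      using bnd[OF z] cpos by auto
    have "\<bar>g * (ln t - ln s)\<bar> \<le> L" using e1 e2 b1 b2 by (simp add: L_def algebra_simps abs_le_iff)
    then have "\<bar>g\<bar> * \<bar>ln t - ln s\<bar> \<le> L" by (simp add: abs_mult)
    then have "\<bar>ln t - ln s\<bar> \<le> L / \<bar>g\<bar>" using gnz by (simp add: field_simps mult.commute)
    then have "ln t \<le> ln s + L / \<bar>g\<bar>" by linarith
    then have "exp (ln t) \<le> exp (ln s + L / \<bar>g\<bar>)" by simp
    then show ?thesis using sp by (simp add: exp_add D_def mult.commute)
  qed
  have "asymp_determined A m"
    unfolding asymp_determined_def
  proof (intro exI[of _ "2*D"] conjI ballI)
    show "0 < 2 * D" using Dpos by simp
    fix x assume x: "x \<in> proj m A"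
    define F where "F = {t. x @ [t] \<in> proj (Suc m) A}"
    have memF: "\<exists>y\<in>A. take m y = x \<and> y!m = t" if "t \<in> F" for t
    proof -
      from that obtain y where y: "y \<in> A" "take (Suc m) y = x @ [t]"
        by (auto simp: F_def proj_def)
      have "length y = n" using Ay[OF y(1)] by simp
      then have "take (Suc m) y = take m y @ [y!m]" using mn by (simp add: take_Suc_conv_app_nth)
      then show ?thesis using y by auto
    qed
    obtain y0 where y0: "y0 \<in> A" "take m y0 = x" using x by (auto simp: proj_def)
    have "take (Suc m) y0 = x @ [y0!m]" using y0 Ay[OF y0(1)] mn by (simp add: take_Suc_conv_app_nth)
    then have y0F: "y0!m \<in> F" using y0 by (force simp: F_def proj_def)
    have Fb: "\<forall>t\<in>F. 0 < t \<and> t < 1" using memF Ay mn by blast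
    have Fbb: "bdd_above F" "bdd_below F" using Fb by (auto intro!: bdd_aboveI[of _ 1] bdd_belowI[of _ 0] simp: less_imp_le)
    have Fne: "F \<noteq> {}" using y0F by auto
    have FD: "t \<le> D * s" if sF: "s \<in> F" and tF: "t \<in> F" for s t
    proof -
      obtain y where y: "y\<in>A" "take m y = x" "y!m = s" using memF[OF sF] by blast
      obtain z where z: "z\<in>A" "take m z = x" "z!m = t" using memF[OF tF] by blast
      show ?thesis using key[OF y(1) z(1)] y z by simp
    qed
    have ub: "uppb A m x = Sup F" by (simp add: uppb_def F_def)
    have lb: "lowb A m x = Inf F" by (simp add: lowb_def F_def)
    have supD: "Sup F \<le> D * s" if "s \<in> F" for s
      using Fne FD that by (intro cSup_least) auto
    have h0: "Sup F / D \<le> Inf F"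
      using Fne supD Dpos by (intro cInf_greatest) (auto simp: field_simps)
    have h1: "Sup F \<ge> y0!m" using y0F Fbb by (simp add: cSup_upper)
    have h2: "y0!m > 0" using Fb y0F by auto
    have i1: "Sup F \<le> D * Inf F" using h0 Dpos by (simp add: divide_le_eq mult.commute)
    have i2: "Inf F > 0"
    proof (rule ccontr)
      assume "\<not> Inf F > 0"
      then have "D * Inf F \<le> 0" using Dpos by (simp add: mult_nonneg_nonpos)
      then show False using i1 h1 h2 by linarith
    qed
    have "D * Inf F < 2 * D * Inf F" using i2 Dpos by simp
    then have "Sup F < 2 * D * Inf F" using i1 by linarith
    then show "uppb A m x < 2 * D * lowb A m x" using ub lb by simp
  qed
  then show False using mJ by (simp add: undet_def)
qed

end
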